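(* Let $\omega_\xi$ be a pure translation-invariant stabilizer state on the spin-$1/2$ chain whose stabilizer generator $W(\xi)$ has length $2n+1$. Then with respect to any bipartite cut of the chain into a left and a right half-chain, $\omega_\xi$ contains exactly $n$ maximally entangled qubit pairs, i.e. $E(\omega_\xi)=\frac{\mathrm{length}(\xi)-1}{2}=n$.
   Context: $\mathcal{P}$ = Laurent polynomials in $u$ over $\mathbb{Z}_2$, $\mathcal{R}$ its palindromes. For $\xi=(\xi_+,\xi_-)\in\mathcal{P}^2$, $W(\xi)=\bigotimes_x W(\xi_+(x),\xi_-(x))$ on the chain $\bigotimes_{x\in\mathbb{Z}}M_2$ (coefficient of $u^x$ at site $x$), with $W(0,0)=\mathbb{1},W(1,0)=\sigma_1,W(0,1)=\sigma_3,W(1,1)=-i\sigma_2$. For $\xi$ reflection invariant ($\xi_\pm\in\mathcal{R}$) with $\gcd(\xi_+,\xi_-)=1$, the pure translation-invariant stabilizer state $\omega_\xi$ is the unique state with $\omega_\xi(A)=1$ for all $A$ in the stabilizer group $\mathcal{S}$ generated by all lattice translates of $W(\xi)$. The length of $\xi$ is the number of sites between the leftmost and rightmost non-identity factor of $W(\xi)$, inclusive (it equals $2\deg\xi+1$, $\deg\xi$ the highest exponent occurring in $\xi_\pm$). For a cut into half-chains $A$ (left) and $B$ (right), $E(\omega_\xi)$, the number of maximally entangled qubit pairs, is the number of pairs $(W(\eta^i),W(\zeta^i))$ of elements of $\mathcal{S}$ supported on both sides of the cut whose restrictions to $A$ anticommute within each pair, commute between different pairs, and commute with every element of $\mathcal{S}$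 supported entirely in $A$ (each such pair behaves as a pair $(\sigma_1^A\otimes\sigma_1^B,\sigma_3^A\otimes\sigma_3^B)$ stabilizing a Bell pair), taken maximal. *)

theory Defs
  imports "HOL-Library.Poly_Mapping" "HOL-Library.Z2"
begin

text \<open>Laurent polynomials in u over Z2: finitely supported maps int to bit;
  coefficient of u^x at key x. The ring structure is the convolution product
  of Poly_Mapping, i.e. ordinary Laurent polynomial multiplication.\<close>
type_synonym lpoly = "int \<Rightarrow>\<^sub>0 bit"

text \<open>A Pauli vector xi = (xi_plus, xi_minus) labels W(xi) up to phase.\<close>
type_synonym pvec = "lpoly \<times> lpoly"

definition palindrome :: "lpoly \<Rightarrow> bool" where
  "palindrome p \<longleftrightarrow> (\<forall>x. Poly_Mapping.lookup p x = Poly_Mapping.lookup p (- x))"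

text \<open>gcd(p,q)=1 in the Laurent polynomial ring: every common divisor is a unit (divides 1)
  (same as the library notion coprime, which needs a class not instantiated here).\<close>
definition lcoprime :: "lpoly \<Rightarrow> lpoly \<Rightarrow> bool" where
  "lcoprime p q \<longleftrightarrow> (\<forall>d. d dvd p \<longrightarrow> d dvd q \<longrightarrow> d dvd 1)"

definition reflection_invariant :: "pvec \<Rightarrow> bool" where
  "reflection_invariant xi \<longleftrightarrow> palindrome (fst xi) \<and> palindrome (snd xi)"

text \<open>Sites where W(xi) has a non-identity tensor factor.\<close>
definition supp :: "pvec \<Rightarrow> int set" where
  "supp xi = Poly_Mapping.keys (fst xi) \<union> Poly_Mapping.keys (snd xi)"

definition plength :: "pvec \<Rightarrow> nat" where
  "plength xi = nat (Max (supp xi) - Min (supp xi) + 1)"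

text \<open>Stabilizer group generated by all translates of W(xi), up to phases:
  products of translates W(u^k xi) are (up to phase) W(f xi) for a Laurent polynomial f.\<close>
definition stab :: "pvec \<Rightarrow> pvec set" where
  "stab xi = {(f * fst xi, f * snd xi) | f. True}"

text \<open>Symplectic form restricted to a set of sites A: the restrictions of W(eta), W(zeta)
  to A commute iff this is 0 and anticommute iff it is 1.\<close>
definition sympl_on :: "int set \<Rightarrow> pvec \<Rightarrow> pvec \<Rightarrow> bit" where
  "sympl_on A eta zeta =
     (\<Sum>x \<in> (supp eta \<inter> supp zeta) \<inter> A.
        Poly_Mapping.lookup (fst eta) x * Poly_Mapping.lookup (snd zeta) x + Poly_Mapping.lookup (snd eta) x * Poly_Mapping.lookup (fst zeta) x)"

definition left_half :: "int \<Rightarrow> int set" where "left_half c = {..c}"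
definition right_half :: "int \<Rightarrow> int set" where "right_half c = {c<..}"

definition bell_pairs :: "pvec \<Rightarrow> int \<Rightarrow> nat \<Rightarrow> (nat \<Rightarrow> pvec) \<Rightarrow> (nat \<Rightarrow> pvec) \<Rightarrow> bool" where
  "bell_pairs xi c k eta zeta \<longleftrightarrow>
     (\<forall>i<k. eta i \<in> stab xi \<and> zeta i \<in> stab xi
        \<and> supp (eta i) \<inter> left_half c \<noteq> {} \<and> supp (eta i) \<inter> right_half c \<noteq> {}
        \<and> supp (zeta i) \<inter> left_half c \<noteq> {} \<and> supp (zeta i) \<inter> right_half c \<noteq> {}
        \<and> sympl_on (left_half c) (eta i) (zeta i) = 1
        \<and> (\<forall>s \<in> stab xi. supp s \<subseteq> left_half c \<longrightarrow>
              sympl_on (left_half c) (eta i) s = 0 \<and> sympl_on (left_half c) (zeta i) s = 0))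
   \<and> (\<forall>i<k. \<forall>j<k. i \<noteq> j \<longrightarrow>
        sympl_on (left_half c) (eta i) (eta j) = 0 \<and> sympl_on (left_half c) (eta i) (zeta j) = 0
        \<and> sympl_on (left_half c) (zeta i) (zeta j) = 0)"

definition entanglement :: "pvec \<Rightarrow> int \<Rightarrow> nat" where
  "entanglement xi c = (GREATEST k. \<exists>eta zeta. bell_pairs xi c k eta zeta)"

end

theory Submission
  imports Defs
begin


lemma bit_cases2: "(x::bit) = 0 \<or> x = 1" by (cases x) auto
lemma bit_add_self[simp]: "(x::bit) + x = 0" by (cases x) auto
lemma bit_uminus[simp]: "- (x::bit) = x" by (metis add_minus_cancel bit_add_self add.commute add_0)
lemma bit_minus[simp]: "(x::bit) - y = x + y" by (metis diff_conv_add_uminus bit_uminus)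
lemma bit_sum_eq0: "(x::bit) + y = 0 \<longleftrightarrow> x = y" by (metis bit_add_self add_left_cancel)
lemma lp_add_self[simp]: "(p::lpoly) + p = 0"
  unfolding poly_mapping_eq_iff fun_eq_iff by (simp only: lookup_add bit_add_self lookup_zero) simp
lemma lp_two[simp]: "(2::lpoly) = 0"
proof -
  have "(2::lpoly) = 1 + 1" by (rule one_add_one[symmetric])
  also have "\<dots> = 0" by (rule lp_add_self)
  finally show ?thesis .
qed

lemma lp_uminus[simp]: "- (p::lpoly) = p"
  by (metis add_minus_cancel lp_add_self add.commute add_0)
lemma lp_minus[simp]: "(p::lpoly) - q = p + q" by (metis diff_conv_add_uminus lp_uminus)

lemma lookup_mult_int:
  "Poly_Mapping.lookup ((f::lpoly) * g) k = (\<Sum>l\<in>Poly_Mapping.keys f. Poly_Mapping.lookup f l * Poly_Mapping.lookup g (k - l))"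
proof -
  have inner: "(\<Sum>q. Poly_Mapping.lookup g q when k = l + q) = Poly_Mapping.lookup g (k - l)" for l
  proof -
    have "(\<Sum>q. Poly_Mapping.lookup g q when k = l + q) = (\<Sum>q. Poly_Mapping.lookup g q when q = k - l)"
      by (rule Sum_any.cong) (auto simp: when_def)
    also have "\<dots> = Poly_Mapping.lookup g (k - l)" by simp
    finally show ?thesis .
  qed
  have "Poly_Mapping.lookup (f * g) k = (\<Sum>l. Poly_Mapping.lookup f l * Poly_Mapping.lookup g (k - l))"
    by (simp add: lookup_mult inner)
  also have "\<dots> = (\<Sum>l\<in>Poly_Mapping.keys f. Poly_Mapping.lookup f l * Poly_Mapping.lookup g (k - l))"
    by (rule Sum_any.expand_superset) (auto simp: in_keys_iff)
  finally show ?thesis .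
qed



abbreviation lk :: "lpoly \<Rightarrow> int \<Rightarrow> bit" where "lk \<equiv> Poly_Mapping.lookup"
abbreviation ks :: "lpoly \<Rightarrow> int set" where "ks \<equiv> Poly_Mapping.keys"

lemma lk_nz_one: "x \<in> ks p \<Longrightarrow> lk p x = 1"
  using bit_cases2 by (auto simp: in_keys_iff)

lemma lookup_mult_max:
  assumes "(p::lpoly) \<noteq> 0" "q \<noteq> 0"
  shows "lk (p*q) (Max (ks p) + Max (ks q)) = 1"
proof -
  let ?a = "Max (ks p)" and ?b = "Max (ks q)"
  have fp: "finite (ks p)" "ks p \<noteq> {}" using assms by auto
  have fq: "finite (ks q)" "ks q \<noteq> {}" using assms by auto
  have ap: "?a \<in> ks p" using fp by simp
  have bq: "?b \<in> ks q" using fq by simp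
  have "lk (p*q) (?a + ?b) = (\<Sum>l\<in>ks p. lk p l * lk q (?a + ?b - l))" by (rule lookup_mult_int)
  also have "\<dots> = lk p ?a * lk q (?a + ?b - ?a) + (\<Sum>l\<in>ks p - {?a}. lk p l * lk q (?a + ?b - l))"
    by (rule sum.remove[OF fp(1) ap])
  also have "(\<Sum>l\<in>ks p - {?a}. lk p l * lk q (?a + ?b - l)) = 0"
  proof (rule sum.neutral, rule ballI)
    fix l assume "l \<in> ks p - {?a}"
    then have l: "l \<in> ks p" "l \<noteq> ?a" by auto
    have "l \<le> ?a" using Max_ge[OF finite_keys l(1)] .
    then have "l < ?a" using l(2) by linarith
    then have "?a + ?b - l > ?b" by simp
    then have "?a + ?b - l \<notin> ks q" using fq by (meson Max_ge not_le)
    then show "lk p l * lk q (?a + ?b - l) = 0" by (simp add: in_keys_iff)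
  qed
  finally show ?thesis using ap bq by (simp add: lk_nz_one)
qed

lemma lookup_mult_min:
  assumes "(p::lpoly) \<noteq> 0" "q \<noteq> 0"
  shows "lk (p*q) (Min (ks p) + Min (ks q)) = 1"
proof -
  let ?a = "Min (ks p)" and ?b = "Min (ks q)"
  have fp: "finite (ks p)" "ks p \<noteq> {}" using assms by auto
  have fq: "finite (ks q)" "ks q \<noteq> {}" using assms by auto
  have ap: "?a \<in> ks p" using fp by simp
  have bq: "?b \<in> ks q" using fq by simp
  have "lk (p*q) (?a + ?b) = (\<Sum>l\<in>ks p. lk p l * lk q (?a + ?b - l))" by (rule lookup_mult_int)
  also have "\<dots> = lk p ?a * lk q (?a + ?b - ?a) + (\<Sum>l\<in>ks p - {?a}. lk p l * lk q (?a + ?b - l))"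
    by (rule sum.remove[OF fp(1) ap])
  also have "(\<Sum>l\<in>ks p - {?a}. lk p l * lk q (?a + ?b - l)) = 0"
  proof (rule sum.neutral, rule ballI)
    fix l assume "l \<in> ks p - {?a}"
    then have l: "l \<in> ks p" "l \<noteq> ?a" by auto
    have "?a \<le> l" using Min_le[OF finite_keys l(1)] .
    then have "l > ?a" using l(2) by linarith
    then have "?a + ?b - l < ?b" by simp
    then have "?a + ?b - l \<notin> ks q" using fq by (meson Min_le not_le)
    then show "lk p l * lk q (?a + ?b - l) = 0" by (simp add: in_keys_iff)
  qed
  finally show ?thesis using ap bq by (simp add: lk_nz_one)
qed

lemma keys_mult_bounds:
  assumes "x \<in> ks ((p::lpoly) * q)"
  shows "x \<le> Max (ks p) + Max (ks q)" "x \<ge> Min (ks p) + Min (ks q)"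
proof -
  from keys_mult assms obtain a b where ab: "x = a + b" "a \<in> ks p" "b \<in> ks q" by blast
  have "a \<le> Max (ks p)" "b \<le> Max (ks q)" "a \<ge> Min (ks p)" "b \<ge> Min (ks q)"
    using ab by (auto intro: Max_ge[OF finite_keys] Min_le[OF finite_keys])
  then show "x \<le> Max (ks p) + Max (ks q)" "x \<ge> Min (ks p) + Min (ks q)" unfolding ab(1)
    by (simp_all add: add_mono)
qed

lemma max_mult:
  assumes "(p::lpoly) \<noteq> 0" "q \<noteq> 0"
  shows "Max (ks (p*q)) = Max (ks p) + Max (ks q)"
proof -
  have "p * q \<noteq> 0" using assms by simp
  have m: "Max (ks p) + Max (ks q) \<in> ks (p*q)" using lookup_mult_max[OF assms] by (simp add: in_keys_iff)
  show ?thesis by (rule Max_eqI) (use m keys_mult_bounds in auto)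
qed

lemma min_mult:
  assumes "(p::lpoly) \<noteq> 0" "q \<noteq> 0"
  shows "Min (ks (p*q)) = Min (ks p) + Min (ks q)"
proof -
  have m: "Min (ks p) + Min (ks q) \<in> ks (p*q)" using lookup_mult_min[OF assms] by (simp add: in_keys_iff)
  show ?thesis by (rule Min_eqI) (use m keys_mult_bounds in auto)
qed

lemma lookup_single_mult: "lk (Poly_Mapping.single a 1 * g) x = lk g (x - a)"
proof -
  have k: "ks (Poly_Mapping.single a (1::bit)) = {a}" by simp
  show ?thesis unfolding lookup_mult_int k by (simp only: sum.insert finite.emptyI empty_iff not_False_eq_True sum.empty add_0_right lookup_single_eq mult_1)
qed



definition span :: "lpoly \<Rightarrow> nat" where "span p = nat (Max (ks p) - Min (ks p))"

lemma keys_single_mult: "x \<in> ks (Poly_Mapping.single k 1 * d) \<longleftrightarrow> x - k \<in> ks d"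
  by (simp add: in_keys_iff lookup_single_mult)

lemma div_step_keys:
  assumes p0: "(p::lpoly) \<noteq> 0" and d: "d \<noteq> 0" and sp: "span d \<le> span p"
    and k: "k = Max (ks p) - Max (ks d)"
  shows "ks (p + Poly_Mapping.single k 1 * d) \<subseteq> {Min (ks p) .. Max (ks p) - 1}"
proof
  define p' where "p' = p + Poly_Mapping.single k 1 * d"
  have fp: "ks p \<noteq> {}" using p0 by simp
  have fd: "ks d \<noteq> {}" using d by simp
  fix x assume x: "x \<in> ks (p + Poly_Mapping.single k 1 * d)"
  then have "x \<in> ks p \<union> ks (Poly_Mapping.single k 1 * d)"
    by (rule subsetD[OF keys_add])
  then have r: "Min (ks p) \<le> x \<and> x \<le> Max (ks p)"
  proof
    assume xp: "x \<in> ks p" show ?thesis using Min_le[OF finite_keys xp] Max_ge[OF finite_keys xp] by (rule conjI)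
  next
    assume "x \<in> ks (Poly_Mapping.single k 1 * d)"
    then have xd: "x - k \<in> ks d" by (simp only: keys_single_mult)
    have a: "x - k \<le> Max (ks d)" using Max_ge[OF finite_keys xd] .
    have b: "Min (ks d) \<le> x - k" using Min_le[OF finite_keys xd] .
    have c: "Min (ks d) \<le> Max (ks d)" using Min_le[OF finite_keys Max_in[OF finite_keys fd]] .
    have e: "Min (ks p) \<le> Max (ks p)" using Min_le[OF finite_keys Max_in[OF finite_keys fp]] .
    have "Max (ks p) - Min (ks p) \<ge> Max (ks d) - Min (ks d)"
      using sp c e unfolding span_def by linarith
    then show ?thesis using a b k by linarith
  qed
  have "x \<noteq> Max (ks p)"
  proof
    assume xm: "x = Max (ks p)"
    have "lk (p + Poly_Mapping.single k 1 * d) x = lk p x + lk d (x - k)"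
      by (simp only: lookup_add lookup_single_mult)
    also have "lk p x = 1" unfolding xm by (rule lk_nz_one[OF Max_in[OF finite_keys fp]])
    also have "x - k = Max (ks d)" unfolding xm k by simp
    also have "lk d (Max (ks d)) = 1" by (rule lk_nz_one[OF Max_in[OF finite_keys fd]])
    finally have "lk (p + Poly_Mapping.single k 1 * d) x = 0" by simp
    then show False using x by (simp add: in_keys_iff)
  qed
  then show "x \<in> {Min (ks p) .. Max (ks p) - 1}" using r by simp
qed

lemma span_less:
  assumes p0: "(p::lpoly) \<noteq> 0" and p'0: "p' \<noteq> 0" and kp: "ks p' \<subseteq> {Min (ks p) .. Max (ks p) - 1}"
  shows "span p' < span p"
proof -
  have ne: "ks p' \<noteq> {}" using p'0 by simp
  have a: "Max (ks p') \<le> Max (ks p) - 1" using kp Max_in[OF finite_keys ne] by auto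
  have b: "Min (ks p) \<le> Min (ks p')" using kp Min_in[OF finite_keys ne] by auto
  have c: "Min (ks p') \<le> Max (ks p')" using Min_le[OF finite_keys Max_in[OF finite_keys ne]] .
  show ?thesis unfolding span_def using a b c by linarith
qed

lemma division:
  assumes d: "(d::lpoly) \<noteq> 0"
  shows "\<exists>q r. p = q * d + r \<and> (r = 0 \<or> span r < span d)"
proof (induction "span p" arbitrary: p rule: less_induct)
  case less
  show ?case
  proof (cases "p = 0 \<or> span p < span d")
    case True
    have "p = 0 * d + p \<and> (p = 0 \<or> span p < span d)" using True by simp
    then show ?thesis by (intro exI)
  next
    case False
    then have p0: "p \<noteq> 0" by simp
    have sp: "span d \<le> span p" using False by simp
    define k where "k = Max (ks p) - Max (ks d)"
    define p' where "p' = p + Poly_Mapping.single k 1 * d"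
    have kp: "ks p' \<subseteq> {Min (ks p) .. Max (ks p) - 1}"
      unfolding p'_def by (rule div_step_keys[OF p0 d sp k_def])
    obtain q' r where qr: "p' = q' * d + r" "r = 0 \<or> span r < span d"
    proof (cases "p' = 0")
      case True then show ?thesis using that[of 0 0] by simp
    next
      case False
      then have "span p' < span p" by (rule span_less[OF p0 _ kp])
      from less[OF this] obtain q0 r0 where "p' = q0 * d + r0 \<and> (r0 = 0 \<or> span r0 < span d)" by (elim exE)
      then show ?thesis using that by (elim conjE)
    qed
    have "p = p' + Poly_Mapping.single k 1 * d" unfolding p'_def by (simp only: add.assoc lp_add_self add_0_right)
    also have "\<dots> = (q' + Poly_Mapping.single k 1) * d + r" unfolding qr(1) by (simp only: distrib_right add_ac)
    finally have "p = (q' + Poly_Mapping.single k 1) * d + r \<and> (r = 0 \<or> span r < span d)" using qr(2) by (intro conjI)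
    then show ?thesis by (intro exI)
  qed
qed

lemma bez_aux: "(x::lpoly) = s'*a + t'*b \<Longrightarrow> g = s*a+t*b \<Longrightarrow> x + q * g = (s' + q * s) * a + (t' + q * t) * b"
  by (simp add: distrib_right distrib_left mult.assoc add_ac)

lemma bez_aux2: "(s*e)*a + (t*e)*b = (s*a + t*(b::lpoly))*e"
  by (simp add: distrib_right distrib_left mult.commute mult.left_commute)

lemma bezout:
  assumes cop: "lcoprime a b" and nz: "a \<noteq> 0 \<or> b \<noteq> 0"
  shows "\<exists>s t. s * a + t * b = (1::lpoly)"
proof -
  define P where "P g \<longleftrightarrow> g \<noteq> 0 \<and> (\<exists>s t. g = s * a + t * b)" for g
  have Pa: "a \<noteq> 0 \<Longrightarrow> P a" unfolding P_def by (intro conjI exI[of _ 1] exI[of _ 0]) simp_all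
  have Pb: "b \<noteq> 0 \<Longrightarrow> P b" unfolding P_def by (intro conjI exI[of _ 0] exI[of _ 1]) simp_all
  obtain g0 where "P g0" using nz Pa Pb by (elim disjE) auto
  from ex_has_least_nat[of P g0 span, OF this] obtain g where g: "P g" and gmin: "\<And>y. P y \<Longrightarrow> span g \<le> span y"
    by (elim exE conjE) (simp only: all_simps(6)[symmetric])
  from g obtain s t where g0: "g \<noteq> 0" and gst: "g = s * a + t * b" unfolding P_def by (elim conjE exE)
  have dv: "g dvd x" if x': "x = s' * a + t' * b" for x s' t'
  proof -
    obtain q r where qr: "x = q * g + r" "r = 0 \<or> span r < span g" using division[OF g0, of x] by (elim exE conjE)
    have "r = x + q * g" using qr(1) by (simp only: add.commute[of "q*g"] add.assoc lp_add_self add_0_right)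
    also have "\<dots> = (s' + q * s) * a + (t' + q * t) * b" by (rule bez_aux[OF x' gst])
    finally have "r = 0 \<or> P r" unfolding P_def by blast
    then have "r = 0" using qr(2) gmin[of r] by linarith
    then show ?thesis using qr(1) by simp
  qed
  have "g dvd a" by (rule dv[of a 1 0]) simp
  moreover have "g dvd b" by (rule dv[of b 0 1]) simp
  ultimately have "g dvd 1" using cop unfolding lcoprime_def by blast
  then obtain e where e: "1 = g * e" by (elim dvdE)
  have "(s*e)*a + (t*e)*b = 1" unfolding bez_aux2 gst[symmetric] e by (simp only: mult.commute)
  then show ?thesis by (intro exI)
qed



definition sc :: "bit \<Rightarrow> lpoly \<Rightarrow> lpoly" where "sc a x = (if a = 1 then x else 0)"

lemma UNIV_bit: "(UNIV :: bit set) = {0, 1}" using bit_cases2 by blast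
lemma card_UNIV_bit: "card (UNIV :: bit set) = 2" unfolding UNIV_bit by simp
lemma card_UNIV_bit2: "card (UNIV :: (bit \<times> bit) set) = 4"
  by (simp only: UNIV_Times_UNIV[symmetric] card_cartesian_product card_UNIV_bit)

locale bform =
  fixes B :: "lpoly \<Rightarrow> lpoly \<Rightarrow> bit"
  assumes Badd: "B (x + y) z = B x z + B y z"
    and Bsym: "B x y = B y x"
    and Balt: "B x x = 0"
begin

lemma Badd2: "B z (x + y) = B z x + B z y"
  using Badd Bsym by metis

lemma B0[simp]: "B 0 z = 0"
  using Badd[of 0 0 z] by simp

lemma B02[simp]: "B z 0 = 0"
  using B0 Bsym by metis

lemma Bsc: "B (sc a x) y = a * B x y"
  using bit_cases2[of a] by (auto simp: sc_def)

lemma Bsc2: "B y (sc a x) = a * B y x"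
  using Bsc Bsym by metis

lemma Bsum: "finite A \<Longrightarrow> B (sum f A) y = (\<Sum>a\<in>A. B (f a) y)"
  by (induction A rule: finite_induct) (simp_all add: Badd)

lemma symplectic_basis:
  "finite S \<Longrightarrow> 0 \<in> S \<Longrightarrow> (\<forall>x\<in>S. \<forall>y\<in>S. x + y \<in> S) \<Longrightarrow> card S = 4 ^ m \<Longrightarrow>
   (\<forall>x\<in>S. x \<noteq> 0 \<longrightarrow> (\<exists>y\<in>S. B x y = 1)) \<Longrightarrow>
   \<exists>e z. (\<forall>i<m. e i \<in> S \<and> z i \<in> S \<and> B (e i) (z i) = 1) \<and>
     (\<forall>i<m. \<forall>j<m. i \<noteq> j \<longrightarrow> B (e i) (e j) = 0 \<and> B (e i) (z j) = 0 \<and> B (z i) (z j) = 0)"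
proof (induction m arbitrary: S)
  case 0
  show ?case by auto
next
  case (Suc m)
  note fin = Suc.prems(1) and S0 = Suc.prems(2) and cl = Suc.prems(3) and cS = Suc.prems(4)
    and nd = Suc.prems(5)
  have clsc: "x \<in> S \<Longrightarrow> sc a x \<in> S" for a x using S0 by (simp add: sc_def)
  have "S \<noteq> {0}" using cS by (auto simp: power_Suc)
  then obtain f where fS: "f \<in> S" and f0: "f \<noteq> 0" using S0 by blast
  obtain g where gS: "g \<in> S" and fg: "B f g = 1" using nd fS f0 by blast
  have gf: "B g f = 1" using fg Bsym by metis
  define S' where "S' = {v \<in> S. B v f = 0 \<and> B v g = 0}"
  define pr where "pr w = w + sc (B w g) f + sc (B w f) g" for w
  have prS: "w \<in> S \<Longrightarrow> pr w \<in> S'" for w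
  proof -
    assume w: "w \<in> S"
    have "pr w \<in> S" unfolding pr_def using cl w clsc fS gS by blast
    moreover have "B (pr w) f = 0" unfolding pr_def
      by (simp add: Badd Bsc Balt gf)
    moreover have "B (pr w) g = 0" unfolding pr_def
      by (simp add: Badd Bsc Balt fg)
    ultimately show ?thesis unfolding S'_def by blast
  qed
  define h where "h = (\<lambda>(v, a, b). v + sc a f + sc b g)"
  have inj: "inj_on h (S' \<times> UNIV \<times> UNIV)"
  proof (rule inj_onI)
    fix x y assume x: "x \<in> S' \<times> UNIV \<times> UNIV" and y: "y \<in> S' \<times> UNIV \<times> UNIV" and eq0: "h x = h y"
    obtain v a b where xv: "x = (v, a, b)" by (cases x) blast
    obtain v' a' b' where yv: "y = (v', a', b')" by (cases y) blast
    have v: "v \<in> S'" using x xv by simp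
    have v': "v' \<in> S'" using y yv by simp
    have eq: "h (v, a, b) = h (v', a', b')" using eq0 xv yv by simp
    have "B (h (v, a, b)) g = a" using v unfolding h_def S'_def by (simp add: Badd Bsc Balt fg)
    moreover have "B (h (v', a', b')) g = a'" using v' unfolding h_def S'_def by (simp add: Badd Bsc Balt fg)
    ultimately have aa: "a = a'" using eq by simp
    have "B (h (v, a, b)) f = b" using v unfolding h_def S'_def by (simp add: Badd Bsc Balt gf)
    moreover have "B (h (v', a', b')) f = b'" using v' unfolding h_def S'_def by (simp add: Badd Bsc Balt gf)
    ultimately have bb: "b = b'" using eq by simp
    have "v = v'" using eq unfolding h_def aa bb by simp
    then show "x = y" using aa bb xv yv by simp
  qed
  have img: "h ` (S' \<times> UNIV \<times> UNIV) = S"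
  proof
    show "h ` (S' \<times> UNIV \<times> UNIV) \<subseteq> S"
      unfolding h_def S'_def using cl clsc fS gS by auto
    show "S \<subseteq> h ` (S' \<times> UNIV \<times> UNIV)"
    proof
      fix w assume w: "w \<in> S"
      have "h (pr w, B w g, B w f) = w"
        unfolding h_def pr_def by (simp add: add.assoc)
      moreover have "(pr w, B w g, B w f) \<in> S' \<times> UNIV \<times> UNIV" using prS[OF w] by simp
      ultimately show "w \<in> h ` (S' \<times> UNIV \<times> UNIV)" by (metis image_eqI)
    qed
  qed
  have finS': "finite S'" using fin unfolding S'_def by simp
  have "card S = card S' * 4"
    using card_image[OF inj] img by (simp add: card_cartesian_product card_UNIV_bit2)
  then have cS': "card S' = 4 ^ m" using cS by (simp add: power_Suc)
  have S'0: "0 \<in> S'" using S0 unfolding S'_def by simp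
  have clS': "\<forall>x\<in>S'. \<forall>y\<in>S'. x + y \<in> S'" using cl unfolding S'_def by (simp add: Badd)
  have ndS': "\<forall>x\<in>S'. x \<noteq> 0 \<longrightarrow> (\<exists>y\<in>S'. B x y = 1)"
  proof (intro ballI impI)
    fix x assume x: "x \<in> S'" "x \<noteq> 0"
    then obtain w where w: "w \<in> S" "B x w = 1" using nd unfolding S'_def by blast
    have "B x (pr w) = 1" using x(1) w(2) unfolding pr_def S'_def by (simp add: Badd2 Bsc2)
    then show "\<exists>y\<in>S'. B x y = 1" using prS[OF w(1)] by blast
  qed
  obtain e z where ez: "\<forall>i<m. e i \<in> S' \<and> z i \<in> S' \<and> B (e i) (z i) = 1"
    and cr: "\<forall>i<m. \<forall>j<m. i \<noteq> j \<longrightarrow> B (e i) (e j) = 0 \<and> B (e i) (z j) = 0 \<and> B (z i) (z j) = 0"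
    using Suc.IH[OF finS' S'0 clS' cS' ndS'] by blast
  have orth: "i < m \<Longrightarrow> B (e i) f = 0 \<and> B (e i) g = 0 \<and> B (z i) f = 0 \<and> B (z i) g = 0" for i
    using ez unfolding S'_def by blast
  let ?e = "e(m := f)" and ?z = "z(m := g)"
  show ?case
  proof (intro exI conjI allI impI)
    fix i assume i: "i < Suc m"
    show "?e i \<in> S" "?z i \<in> S" "B (?e i) (?z i) = 1"
      using i ez fS gS fg unfolding S'_def by (auto simp: less_Suc_eq)
  next
    fix i j assume i: "i < Suc m" and j: "j < Suc m" and ij: "i \<noteq> j"
    show "B (?e i) (?e j) = 0" "B (?e i) (?z j) = 0" "B (?z i) (?z j) = 0"
      using i j ij cr orth Bsym by (auto simp: less_Suc_eq)
  qed
qed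

lemma pairs_bound:
  fixes \<pi> :: "lpoly \<Rightarrow> lpoly"
  assumes padd: "\<And>x y. \<pi> (x + y) = \<pi> x + \<pi> y"
    and prad: "\<And>x y. \<pi> x = 0 \<Longrightarrow> B x y = 0"
    and pT: "\<And>x. \<pi> x \<in> T" and finT: "finite T" and cT: "card T \<le> 4 ^ n"
    and ez: "\<forall>i<k. B (e i) (z i) = 1"
    and cr: "\<forall>i<k. \<forall>j<k. i \<noteq> j \<longrightarrow> B (e i) (e j) = 0 \<and> B (e i) (z j) = 0 \<and> B (z i) (z j) = 0"
  shows "k \<le> n"
proof -
  define \<sigma> where "\<sigma> = (\<lambda>(P, Q). sum e P + sum z Q)"
  define D where "D = Pow {..<k} \<times> Pow {..<k}"
  have Bz: "B (\<sigma> (P, Q)) (z i) = of_bool (i \<in> P)" if "P \<subseteq> {..<k}" "Q \<subseteq> {..<k}" "i < k" for P Q i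
  proof -
    have fP: "finite P" "finite Q" using that finite_subset by blast+
    have "B (sum e P) (z i) = (\<Sum>j\<in>P. if j = i then 1 else 0)"
      unfolding Bsum[OF fP(1)]
    proof (rule sum.cong[OF refl])
      fix j assume "j \<in> P" then have j: "j < k" using that by blast
      show "B (e j) (z i) = (if j = i then 1 else 0)"
        using j that(3) cr ez by (cases "j = i") simp_all
    qed
    also have "\<dots> = of_bool (i \<in> P)" using fP(1) by (simp add: sum.delta')
    finally have a: "B (sum e P) (z i) = of_bool (i \<in> P)" .
    have "B (sum z Q) (z i) = (\<Sum>j\<in>Q. 0)"
      unfolding Bsum[OF fP(2)]
    proof (rule sum.cong[OF refl])
      fix j assume "j \<in> Q" then have j: "j < k" using that by blast
      show "B (z j) (z i) = 0"
        using j that(3) cr Balt by (cases "j = i") simp_all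
    qed
    then have b: "B (sum z Q) (z i) = 0" by simp
    show ?thesis unfolding \<sigma>_def using a b by (simp add: Badd)
  qed
  have Be: "B (\<sigma> (P, Q)) (e i) = of_bool (i \<in> Q)" if "P \<subseteq> {..<k}" "Q \<subseteq> {..<k}" "i < k" for P Q i
  proof -
    have fP: "finite P" "finite Q" using that finite_subset by blast+
    have "B (sum z Q) (e i) = (\<Sum>j\<in>Q. if j = i then 1 else 0)"
      unfolding Bsum[OF fP(2)]
    proof (rule sum.cong[OF refl])
      fix j assume "j \<in> Q" then have j: "j < k" using that by blast
      show "B (z j) (e i) = (if j = i then 1 else 0)"
        using j that(3) cr ez Bsym[of "z j" "e i"] by (cases "j = i") simp_all
    qed
    also have "\<dots> = of_bool (i \<in> Q)" using fP(2) by (simp add: sum.delta')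
    finally have a: "B (sum z Q) (e i) = of_bool (i \<in> Q)" .
    have "B (sum e P) (e i) = (\<Sum>j\<in>P. 0)"
      unfolding Bsum[OF fP(1)]
    proof (rule sum.cong[OF refl])
      fix j assume "j \<in> P" then have j: "j < k" using that by blast
      show "B (e j) (e i) = 0"
        using j that(3) cr Balt by (cases "j = i") simp_all
    qed
    then have b: "B (sum e P) (e i) = 0" by simp
    show ?thesis unfolding \<sigma>_def using a b by (simp add: Badd)
  qed
  have inj: "inj_on (\<lambda>x. \<pi> (\<sigma> x)) D"
  proof (rule inj_onI)
    fix x y assume x: "x \<in> D" and y: "y \<in> D" and eq: "\<pi> (\<sigma> x) = \<pi> (\<sigma> y)"
    obtain P Q where xv: "x = (P, Q)" by (cases x)
    obtain P' Q' where yv: "y = (P', Q')" by (cases y)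
    have s: "P \<subseteq> {..<k}" "Q \<subseteq> {..<k}" "P' \<subseteq> {..<k}" "Q' \<subseteq> {..<k}" using x y xv yv D_def by auto
    have "\<pi> (\<sigma> x + \<sigma> y) = 0" unfolding padd eq by (rule lp_add_self)
    then have rad: "B (\<sigma> x) w + B (\<sigma> y) w = 0" for w using prad Badd by metis
    have "P = P'"
    proof -
      have "i \<in> P \<longleftrightarrow> i \<in> P'" if i: "i < k" for i
        using rad[of "z i"] Bz[OF s(1,2) i] Bz[OF s(3,4) i] xv yv by (simp add: bit_sum_eq0)
      then show ?thesis using s by blast
    qed
    moreover have "Q = Q'"
    proof -
      have "i \<in> Q \<longleftrightarrow> i \<in> Q'" if i: "i < k" for i
        using rad[of "e i"] Be[OF s(1,2) i] Be[OF s(3,4) i] xv yv by (simp add: bit_sum_eq0)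
      then show ?thesis using s by blast
    qed
    ultimately show "x = y" using xv yv by simp
  qed
  have "(\<lambda>x. \<pi> (\<sigma> x)) ` D \<subseteq> T" using pT by blast
  then have "card ((\<lambda>x. \<pi> (\<sigma> x)) ` D) \<le> card T" using finT by (rule card_mono[rotated])
  moreover have "card ((\<lambda>x. \<pi> (\<sigma> x)) ` D) = 4 ^ k"
    using card_image[OF inj] unfolding D_def by (simp add: card_cartesian_product card_Pow power_mult_distrib[symmetric])
  ultimately have "(4::nat) ^ k \<le> 4 ^ n" using cT by linarith
  then show ?thesis by simp
qed

end



definition res :: "int set \<Rightarrow> lpoly \<Rightarrow> lpoly" where
  "res S f = Abs_poly_mapping (\<lambda>x. if x \<in> S then lk f x else 0)"

lemma lk_res: "lk (res S f) x = (if x \<in> S then lk f x else 0)"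
proof -
  have "finite {x. (if x \<in> S then lk f x else 0) \<noteq> 0}"
    by (rule finite_subset[OF _ finite_keys[of f]]) (auto simp: in_keys_iff)
  then show ?thesis unfolding res_def by simp
qed

lemma ks_res: "x \<in> ks (res S f) \<longleftrightarrow> x \<in> S \<and> x \<in> ks f"
  by (simp add: in_keys_iff lk_res)

lemma res_add: "res S (f + g) = res S f + res S g"
  by (rule poly_mapping_eqI) (simp add: lk_res lookup_add)

lemma res_split: "f = res S f + res (- S) f"
  by (rule poly_mapping_eqI) (simp add: lk_res lookup_add)

lemma res_id: "ks f \<subseteq> S \<Longrightarrow> res S f = f"
  by (rule poly_mapping_eqI) (auto simp: lk_res in_keys_iff)

lemma lk_eq_keys: "lk (f::lpoly) x = (if x \<in> ks f then 1 else 0)"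
  using lk_nz_one[of x f] by (auto simp: in_keys_iff)

lemma eq_by_keys: "ks (f::lpoly) = ks g \<Longrightarrow> f = g"
  by (rule poly_mapping_eqI) (simp add: lk_eq_keys)

definition ind :: "int set \<Rightarrow> lpoly" where
  "ind S = Abs_poly_mapping (\<lambda>x. if x \<in> S then 1 else 0)"

lemma ks_ind: "finite S \<Longrightarrow> ks (ind S) = S"
proof -
  assume fS: "finite S"
  have "finite {x. (if x \<in> S then (1::bit) else 0) \<noteq> 0}"
    by (rule finite_subset[OF _ fS]) auto
  then have "lk (ind S) x = (if x \<in> S then 1 else 0)" for x unfolding ind_def by simp
  then show ?thesis by (auto simp: in_keys_iff split: if_splits)
qed

lemma card_polys: "finite W \<Longrightarrow> card {f::lpoly. ks f \<subseteq> W} = 2 ^ card W"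
proof -
  assume fW: "finite W"
  have "bij_betw ks {f::lpoly. ks f \<subseteq> W} (Pow W)"
  proof (rule bij_betw_imageI)
    show "inj_on ks {f::lpoly. ks f \<subseteq> W}" by (rule inj_onI) (rule eq_by_keys)
    show "ks ` {f::lpoly. ks f \<subseteq> W} = Pow W"
    proof
      show "ks ` {f::lpoly. ks f \<subseteq> W} \<subseteq> Pow W" by auto
      show "Pow W \<subseteq> ks ` {f::lpoly. ks f \<subseteq> W}"
      proof
        fix S assume "S \<in> Pow W"
        then have S: "S \<subseteq> W" by simp
        then have fS: "finite S" using fW finite_subset by blast
        show "S \<in> ks ` {f::lpoly. ks f \<subseteq> W}"
          using ks_ind[OF fS] S by (intro image_eqI[of _ _ "ind S"]) auto
      qed
    qed
  qed
  then have "card {f::lpoly. ks f \<subseteq> W} = card (Pow W)" by (rule bij_betw_same_card)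
  then show ?thesis using fW by (simp add: card_Pow)
qed

lemma finite_polys: "finite W \<Longrightarrow> finite {f::lpoly. ks f \<subseteq> W}"
  using card_polys[of W] by (metis card.infinite power_not_zero zero_neq_numeral)

lemma sum_monos: "(f::lpoly) = (\<Sum>t\<in>ks f. Poly_Mapping.single t 1)"
proof (rule poly_mapping_eqI)
  fix x
  have "lk (\<Sum>t\<in>ks f. Poly_Mapping.single t 1) x = (\<Sum>t\<in>ks f. lk (Poly_Mapping.single t 1) x)"
    by (rule lookup_sum)
  also have "\<dots> = (\<Sum>t\<in>ks f. if x = t then 1 else 0)"
    by (rule sum.cong) (auto simp: lookup_single)
  also have "\<dots> = (if x \<in> ks f then 1 else 0)" by (simp add: sum.delta)
  finally show "lk f x = lk (\<Sum>t\<in>ks f. Poly_Mapping.single t 1) x" by (simp add: lk_eq_keys[of f x])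
qed

definition sterm :: "pvec \<Rightarrow> pvec \<Rightarrow> int \<Rightarrow> bit" where
  "sterm eta zeta x = lk (fst eta) x * lk (snd zeta) x + lk (snd eta) x * lk (fst zeta) x"

lemma term_zero1: "x \<notin> supp eta \<Longrightarrow> sterm eta zeta x = 0"
  by (simp add: sterm_def supp_def in_keys_iff)
lemma term_zero2: "x \<notin> supp zeta \<Longrightarrow> sterm eta zeta x = 0"
  by (simp add: sterm_def supp_def in_keys_iff)

lemma sympl_term: "sympl_on A eta zeta = (\<Sum>x\<in>(supp eta \<inter> supp zeta) \<inter> A. sterm eta zeta x)"
  unfolding sympl_on_def sterm_def ..

lemma finite_supp: "finite (supp eta)" by (simp add: supp_def)

lemma sympl_alt:
  assumes fT: "finite T" and sub: "supp eta \<inter> supp zeta \<subseteq> T"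
  shows "sympl_on A eta zeta = (\<Sum>x\<in>T \<inter> A. sterm eta zeta x)"
  unfolding sympl_term
proof (rule sum.mono_neutral_left)
  show "finite (T \<inter> A)" using fT by simp
  show "supp eta \<inter> supp zeta \<inter> A \<subseteq> T \<inter> A" using sub by blast
  show "\<forall>i\<in>T \<inter> A - supp eta \<inter> supp zeta \<inter> A. sterm eta zeta i = 0"
    using term_zero1 term_zero2 by blast
qed

lemma sterm_sym: "sterm eta zeta x = sterm zeta eta x"
  unfolding sterm_def by (simp only: mult.commute add.commute)

lemma sterm_alt: "sterm eta eta x = 0"
  unfolding sterm_def by (simp only: mult.commute[of "lk (snd eta) x"] bit_add_self)

lemma sympl_sym: "sympl_on A eta zeta = sympl_on A zeta eta"
  unfolding sympl_term Int_commute[of "supp eta"] by (rule sum.cong[OF refl], rule sterm_sym)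

lemma sympl_alt_eq: "sympl_on A eta eta = 0"
  unfolding sympl_term by (rule sum.neutral) (intro ballI sterm_alt)



lemma conv_pal:
  assumes pal: "palindrome Q" and fT: "finite T" and sub: "ks R \<subseteq> T"
  shows "lk (R * Q) t = (\<Sum>x\<in>T. lk R x * lk Q (x - t))"
proof -
  have "lk (R * Q) t = (\<Sum>x\<in>ks R. lk R x * lk Q (t - x))" by (rule lookup_mult_int)
  also have "\<dots> = (\<Sum>x\<in>ks R. lk R x * lk Q (x - t))"
  proof (rule sum.cong[OF refl])
    fix x have "lk Q (t - x) = lk Q (- (t - x))" by (rule pal[unfolded palindrome_def, rule_format])
    then show "lk R x * lk Q (t - x) = lk R x * lk Q (x - t)" by simp
  qed
  also have "\<dots> = (\<Sum>x\<in>T. lk R x * lk Q (x - t))"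
    by (rule sum.mono_neutral_left[OF fT sub]) (auto simp: in_keys_iff)
  finally show ?thesis .
qed

lemma lp_sum_eq0: "(a::lpoly) + b = 0 \<Longrightarrow> a = b"
proof -
  assume h: "a + b = 0"
  have "a = a + (b + b)" by (simp only: lp_add_self add_0_right)
  also have "\<dots> = (a + b) + b" by (simp only: add.assoc)
  also have "\<dots> = b" by (simp only: h add_0_left)
  finally show ?thesis .
qed

locale chain =
  fixes xi :: pvec and n :: nat and c :: int
  assumes ri: "reflection_invariant xi" and cop: "lcoprime (fst xi) (snd xi)"
    and len: "plength xi = 2 * n + 1"
begin

definition Psi :: "lpoly \<Rightarrow> pvec" where "Psi f = (f * fst xi, f * snd xi)"
definition Bc :: "lpoly \<Rightarrow> lpoly \<Rightarrow> bit" where "Bc f g = sympl_on (left_half c) (Psi f) (Psi g)"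

lemma palP: "palindrome (fst xi)" and palM: "palindrome (snd xi)"
  using ri unfolding reflection_invariant_def by auto

lemma xi_nz: "fst xi \<noteq> 0 \<or> snd xi \<noteq> 0"
proof (rule ccontr)
  assume "\<not> (fst xi \<noteq> 0 \<or> snd xi \<noteq> 0)"
  then have "fst xi = 0" "snd xi = 0" by auto
  then have "(0::lpoly) dvd 1" using cop unfolding lcoprime_def by auto
  then show False by simp
qed

lemma supp_ne: "supp xi \<noteq> {}"
  using xi_nz unfolding supp_def by auto

lemma supp_neg: "x \<in> supp xi \<Longrightarrow> - x \<in> supp xi"
proof -
  assume x: "x \<in> supp xi"
  have "lk (fst xi) (- x) = lk (fst xi) x" "lk (snd xi) (- x) = lk (snd xi) x"
    using palP[unfolded palindrome_def, rule_format, of "- x"] palM[unfolded palindrome_def, rule_format, of "- x"]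
    by simp_all
  then show ?thesis using x unfolding supp_def in_keys_iff Un_iff mem_Collect_eq by simp
qed

lemma Max_supp: "Max (supp xi) = int n" and Min_supp: "Min (supp xi) = - int n"
proof -
  have fs: "finite (supp xi)" by (rule finite_supp)
  have mi: "Min (supp xi) = - Max (supp xi)"
  proof (rule Min_eqI[OF fs])
    show "- Max (supp xi) \<in> supp xi" by (rule supp_neg[OF Max_in[OF fs supp_ne]])
    fix y assume "y \<in> supp xi"
    then have "- y \<le> Max (supp xi)" by (rule Max_ge[OF fs supp_neg])
    then show "- Max (supp xi) \<le> y" by simp
  qed
  have "Min (supp xi) \<le> Max (supp xi)" using Min_le[OF fs Max_in[OF fs supp_ne]] .
  then have ge: "Max (supp xi) \<ge> 0" using mi by simp
  have "nat (Max (supp xi) - Min (supp xi) + 1) = 2 * n + 1" using len unfolding plength_def .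
  then have "Max (supp xi) = int n" using mi ge by linarith
  then show "Max (supp xi) = int n" "Min (supp xi) = - int n" using mi by auto
qed

lemma kbound: "x \<in> supp xi \<Longrightarrow> - int n \<le> x \<and> x \<le> int n"
proof -
  assume x: "x \<in> supp xi"
  have "x \<le> Max (supp xi)" "Min (supp xi) \<le> x" using Max_ge[OF finite_supp x] Min_le[OF finite_supp x] .
  then show ?thesis unfolding Max_supp Min_supp by simp
qed

lemma kboundP: "x \<in> ks (fst xi) \<Longrightarrow> - int n \<le> x \<and> x \<le> int n"
  by (rule kbound) (simp add: supp_def)
lemma kboundM: "x \<in> ks (snd xi) \<Longrightarrow> - int n \<le> x \<and> x \<le> int n"
  by (rule kbound) (simp add: supp_def)
lemma kboundS: "s \<in> {fst xi, snd xi} \<Longrightarrow> x \<in> ks s \<Longrightarrow> - int n \<le> x \<and> x \<le> int n"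
  using kboundP kboundM by (elim insertE) simp_all

lemma top_comp: "\<exists>s\<in>{fst xi, snd xi}. s \<noteq> 0 \<and> Max (ks s) = int n"
proof -
  have "int n \<in> supp xi" using Max_in[OF finite_supp supp_ne] Max_supp by simp
  then obtain s where s: "s \<in> {fst xi, snd xi}" "int n \<in> ks s" unfolding supp_def by blast
  then have s0: "s \<noteq> 0" by auto
  have "Max (ks s) = int n"
  proof (rule Max_eqI[OF finite_keys _ s(2)])
    fix y assume "y \<in> ks s" then show "y \<le> int n" using kboundS[OF s(1)] by simp
  qed
  then show ?thesis using s s0 by blast
qed

lemma bot_comp: "\<exists>s\<in>{fst xi, snd xi}. s \<noteq> 0 \<and> Min (ks s) = - int n"
proof -
  have "- int n \<in> supp xi" using Min_in[OF finite_supp supp_ne] Min_supp by simp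
  then obtain s where s: "s \<in> {fst xi, snd xi}" "- int n \<in> ks s" unfolding supp_def by blast
  then have s0: "s \<noteq> 0" by auto
  have "Min (ks s) = - int n"
  proof (rule Min_eqI[OF finite_keys _ s(2)])
    fix y assume "y \<in> ks s" then show "- int n \<le> y" using kboundS[OF s(1)] by simp
  qed
  then show ?thesis using s s0 by blast
qed

lemma supp_Psi: "supp (Psi f) = ks (f * fst xi) \<union> ks (f * snd xi)"
  unfolding supp_def Psi_def by simp

lemma low_deg:
  assumes "ks (f * fst xi) \<subseteq> {..c}" "ks (f * snd xi) \<subseteq> {..c}"
  shows "ks f \<subseteq> {..c - int n}"
proof (cases "f = 0")
  case False
  obtain s where s: "s \<in> {fst xi, snd xi}" "s \<noteq> 0" "Max (ks s) = int n" using top_comp by blast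
  have sub: "ks (f * s) \<subseteq> {..c}" using s(1) assms by (elim insertE) simp_all
  have ne: "ks (f * s) \<noteq> {}" using False s(2) by simp
  have "Max (ks (f * s)) \<le> c" using sub Max_in[OF finite_keys ne] by auto
  then have m: "Max (ks f) \<le> c - int n" using max_mult[OF False s(2)] s(3) by simp
  show ?thesis
  proof
    fix x assume "x \<in> ks f"
    then have "x \<le> Max (ks f)" by (rule Max_ge[OF finite_keys])
    then show "x \<in> {..c - int n}" using m by simp
  qed
qed simp

lemma high_deg:
  assumes "ks (f * fst xi) \<subseteq> {c<..}" "ks (f * snd xi) \<subseteq> {c<..}"
  shows "ks f \<subseteq> {c + int n + 1..}"
proof (cases "f = 0")
  case False
  obtain s where s: "s \<in> {fst xi, snd xi}" "s \<noteq> 0" "Min (ks s) = - int n" using bot_comp by blast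
  have sub: "ks (f * s) \<subseteq> {c<..}" using s(1) assms by (elim insertE) simp_all
  have ne: "ks (f * s) \<noteq> {}" using False s(2) by simp
  have "Min (ks (f * s)) > c" using sub Min_in[OF finite_keys ne] by auto
  then have m: "Min (ks f) \<ge> c + int n + 1" using min_mult[OF False s(2)] s(3) by simp
  show ?thesis
  proof
    fix x assume "x \<in> ks f"
    then have "Min (ks f) \<le> x" by (rule Min_le[OF finite_keys])
    then show "x \<in> {c + int n + 1..}" using m by simp
  qed
qed simp

lemma keys_low: "ks f \<subseteq> {..c - int n} \<Longrightarrow> ks (f * s) \<subseteq> {..c}" if "s \<in> {fst xi, snd xi}" for f s
proof
  fix x assume f: "ks f \<subseteq> {..c - int n}" and x: "x \<in> ks (f * s)"
  from keys_mult x obtain a b where ab: "x = a + b" "a \<in> ks f" "b \<in> ks s" by blast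
  have "b \<le> int n" using kboundS[OF that ab(3)] by simp
  then show "x \<in> {..c}" using f ab by auto
qed

lemma keys_high: "ks f \<subseteq> {c + int n + 1..} \<Longrightarrow> ks (f * s) \<subseteq> {c<..}" if "s \<in> {fst xi, snd xi}" for f s
proof
  fix x assume f: "ks f \<subseteq> {c + int n + 1..}" and x: "x \<in> ks (f * s)"
  from keys_mult x obtain a b where ab: "x = a + b" "a \<in> ks f" "b \<in> ks s" by blast
  have "b \<ge> - int n" using kboundS[OF that ab(3)] by simp
  then show "x \<in> {c<..}" using f ab by auto
qed

end



context chain
begin

lemma keys_add_mem: "x \<in> ks ((a::lpoly) + b) \<Longrightarrow> x \<in> ks a \<or> x \<in> ks b"
  by (auto simp: in_keys_iff lookup_add)

lemma lk_Psi: "lk (fst (Psi f)) x = lk (f * fst xi) x" "lk (snd (Psi f)) x = lk (f * snd xi) x"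
  unfolding Psi_def by simp_all

lemma sterm_add: "sterm (Psi (f + g)) z x = sterm (Psi f) z x + sterm (Psi g) z x"
  unfolding sterm_def Psi_def by (simp only: fst_conv snd_conv distrib_right lookup_add add_ac)

lemma Bc_add: "Bc (f + g) h = Bc f h + Bc g h"
proof -
  define T where "T = supp (Psi f) \<union> supp (Psi g)"
  have fT: "finite T" unfolding T_def by (simp add: finite_supp)
  have s1: "supp (Psi (f + g)) \<subseteq> T"
  proof
    fix x assume "x \<in> supp (Psi (f + g))"
    then have "x \<in> ks (f * fst xi + g * fst xi) \<union> ks (f * snd xi + g * snd xi)"
      unfolding supp_Psi by (simp only: distrib_right)
    then have "x \<in> (ks (f * fst xi) \<union> ks (g * fst xi)) \<union> (ks (f * snd xi) \<union> ks (g * snd xi))"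
    proof (elim UnE)
      assume "x \<in> ks (f * fst xi + g * fst xi)"
      from keys_add_mem[OF this] show ?thesis by (elim disjE) simp_all
    next
      assume "x \<in> ks (f * snd xi + g * snd xi)"
      from keys_add_mem[OF this] show ?thesis by (elim disjE) simp_all
    qed
    then show "x \<in> T" unfolding T_def supp_Psi by blast
  qed
  have "Bc (f + g) h = (\<Sum>x\<in>T \<inter> left_half c. sterm (Psi (f + g)) (Psi h) x)"
    unfolding Bc_def by (rule sympl_alt[OF fT]) (use s1 in blast)
  also have "\<dots> = (\<Sum>x\<in>T \<inter> left_half c. sterm (Psi f) (Psi h) x) + (\<Sum>x\<in>T \<inter> left_half c. sterm (Psi g) (Psi h) x)"
    unfolding sterm_add by (rule sum.distrib)
  also have "(\<Sum>x\<in>T \<inter> left_half c. sterm (Psi f) (Psi h) x) = Bc f h"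
    unfolding Bc_def by (rule sympl_alt[OF fT, symmetric]) (auto simp: T_def)
  also have "(\<Sum>x\<in>T \<inter> left_half c. sterm (Psi g) (Psi h) x) = Bc g h"
    unfolding Bc_def by (rule sympl_alt[OF fT, symmetric]) (auto simp: T_def)
  finally show ?thesis .
qed

lemma Bc_sym: "Bc f g = Bc g f" unfolding Bc_def by (rule sympl_sym)
lemma Bc_alt: "Bc f f = 0" unfolding Bc_def by (rule sympl_alt_eq)

sublocale bform Bc
  by unfold_locales (rule Bc_add, rule Bc_sym, rule Bc_alt)

lemma Bsum2: "finite A \<Longrightarrow> Bc y (sum f A) = (\<Sum>a\<in>A. Bc y (f a))"
  using Bsum[of A f y] Bc_sym by simp

lemma Bc_high: "ks f \<subseteq> {c + int n + 1..} \<Longrightarrow> Bc f g = 0"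
proof -
  assume f: "ks f \<subseteq> {c + int n + 1..}"
  have "supp (Psi f) \<subseteq> {c<..}" unfolding supp_Psi using keys_high[OF _ f] by simp
  then have "(supp (Psi f) \<inter> supp (Psi g)) \<inter> left_half c = {}" unfolding left_half_def by auto
  then show ?thesis unfolding Bc_def sympl_on_def by (simp only: sum.empty)
qed

lemma sterm_mono: "sterm (Psi f) (Psi (Poly_Mapping.single t 1)) x =
   lk (f * fst xi) x * lk (snd xi) (x - t) + lk (f * snd xi) x * lk (fst xi) (x - t)"
  unfolding sterm_def Psi_def by (simp only: fst_conv snd_conv lookup_single_mult)

lemma Bc_mono: "Bc f (Poly_Mapping.single t 1) =
  (\<Sum>x\<in>supp (Psi f) \<inter> left_half c. lk (f * fst xi) x * lk (snd xi) (x - t) + lk (f * snd xi) x * lk (fst xi) (x - t))"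
  unfolding Bc_def sterm_mono[symmetric] by (rule sympl_alt[OF finite_supp]) blast

lemma Bc_low_mono: "ks f \<subseteq> {..c - int n} \<Longrightarrow> Bc f (Poly_Mapping.single t 1) = 0"
proof -
  assume f: "ks f \<subseteq> {..c - int n}"
  have sub: "supp (Psi f) \<subseteq> left_half c" unfolding supp_Psi left_half_def using keys_low[OF _ f] by simp
  then have TA: "supp (Psi f) \<inter> left_half c = supp (Psi f)" by blast
  let ?T = "supp (Psi f)"
  have "Bc f (Poly_Mapping.single t 1) = (\<Sum>x\<in>?T. lk (f * fst xi) x * lk (snd xi) (x - t)) + (\<Sum>x\<in>?T. lk (f * snd xi) x * lk (fst xi) (x - t))"
    unfolding Bc_mono TA by (rule sum.distrib)
  also have "\<dots> = lk (f * fst xi * snd xi) t + lk (f * snd xi * fst xi) t"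
    using conv_pal[OF palM finite_supp, of "f * fst xi" "Psi f" t] conv_pal[OF palP finite_supp, of "f * snd xi" "Psi f" t]
    unfolding supp_Psi by simp
  also have "f * snd xi * fst xi = f * fst xi * snd xi" by (simp only: mult.assoc mult.commute[of "snd xi"])
  finally show ?thesis by (simp only: bit_add_self)
qed

lemma Bc_low: "ks f \<subseteq> {..c - int n} \<Longrightarrow> Bc f g = 0"
proof -
  assume f: "ks f \<subseteq> {..c - int n}"
  have "Bc f g = (\<Sum>t\<in>ks g. Bc f (Poly_Mapping.single t 1))"
    by (subst sum_monos[of g]) (rule Bsum2[OF finite_keys])
  also have "\<dots> = 0" using Bc_low_mono[OF f] by simp
  finally show ?thesis .
qed

end



context chain
begin

lemma radical:
  assumes allt: "\<And>t. Bc f (Poly_Mapping.single t 1) = 0"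
  shows "res {..c} (f * fst xi) * snd xi = res {..c} (f * snd xi) * fst xi"
proof -
  let ?A = "{..c}" and ?T = "supp (Psi f)"
  have e1: "lk (res ?A (f * fst xi) * snd xi) t = (\<Sum>x\<in>?T \<inter> left_half c. lk (f * fst xi) x * lk (snd xi) (x - t))" for t
  proof -
    have "lk (res ?A (f * fst xi) * snd xi) t = (\<Sum>x\<in>?T. lk (res ?A (f * fst xi)) x * lk (snd xi) (x - t))"
      by (rule conv_pal[OF palM finite_supp]) (auto simp: ks_res supp_Psi)
    also have "\<dots> = (\<Sum>x\<in>?T. if x \<in> left_half c then lk (f * fst xi) x * lk (snd xi) (x - t) else 0)"
      by (rule sum.cong[OF refl]) (simp add: lk_res left_half_def)
    also have "\<dots> = (\<Sum>x\<in>?T \<inter> left_half c. lk (f * fst xi) x * lk (snd xi) (x - t))"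
      by (rule sum.inter_restrict[symmetric, OF finite_supp])
    finally show ?thesis .
  qed
  have e2: "lk (res ?A (f * snd xi) * fst xi) t = (\<Sum>x\<in>?T \<inter> left_half c. lk (f * snd xi) x * lk (fst xi) (x - t))" for t
  proof -
    have "lk (res ?A (f * snd xi) * fst xi) t = (\<Sum>x\<in>?T. lk (res ?A (f * snd xi)) x * lk (fst xi) (x - t))"
      by (rule conv_pal[OF palP finite_supp]) (auto simp: ks_res supp_Psi)
    also have "\<dots> = (\<Sum>x\<in>?T. if x \<in> left_half c then lk (f * snd xi) x * lk (fst xi) (x - t) else 0)"
      by (rule sum.cong[OF refl]) (simp add: lk_res left_half_def)
    also have "\<dots> = (\<Sum>x\<in>?T \<inter> left_half c. lk (f * snd xi) x * lk (fst xi) (x - t))"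
      by (rule sum.inter_restrict[symmetric, OF finite_supp])
    finally show ?thesis .
  qed
  have "res ?A (f * fst xi) * snd xi + res ?A (f * snd xi) * fst xi = 0"
  proof (rule poly_mapping_eqI)
    fix t
    have "lk (res ?A (f * fst xi) * snd xi + res ?A (f * snd xi) * fst xi) t = Bc f (Poly_Mapping.single t 1)"
      unfolding lookup_add e1 e2 Bc_mono by (rule sum.distrib[symmetric])
    then show "lk (res ?A (f * fst xi) * snd xi + res ?A (f * snd xi) * fst xi) t = lk 0 t"
      using allt by simp
  qed
  then show ?thesis by (rule lp_sum_eq0)
qed

definition W :: "int set" where "W = {c - int n + 1 .. c + int n}"

lemma nondeg:
  assumes fW: "ks f \<subseteq> W" and f0: "f \<noteq> 0"
  shows "\<exists>g. ks g \<subseteq> W \<and> Bc f g = 1"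
proof (rule ccontr)
  assume "\<not> (\<exists>g. ks g \<subseteq> W \<and> Bc f g = 1)"
  then have nW: "ks g \<subseteq> W \<Longrightarrow> Bc f g = 0" for g using bit_cases2[of "Bc f g"] by blast
  have allt: "Bc f (Poly_Mapping.single t 1) = 0" for t
  proof -
    have kt: "ks (Poly_Mapping.single t (1::bit)) = {t}" by simp
    consider "t \<in> W" | "t \<le> c - int n" | "t \<ge> c + int n + 1" unfolding W_def by fastforce
    then show ?thesis
    proof cases
      case 1 then show ?thesis using nW kt by simp
    next
      case 2
      then have "Bc (Poly_Mapping.single t 1) f = 0" by (intro Bc_low) (simp add: kt)
      then show ?thesis using Bc_sym by simp
    next
      case 3
      then have "Bc (Poly_Mapping.single t 1) f = 0" by (intro Bc_high) (simp add: kt)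
      then show ?thesis using Bc_sym by simp
    qed
  qed
  define L1 where "L1 = res {..c} (f * fst xi)"
  define L2 where "L2 = res {..c} (f * snd xi)"
  have rad: "L1 * snd xi = L2 * fst xi" unfolding L1_def L2_def by (rule radical[OF allt])
  obtain a b where ab: "a * fst xi + b * snd xi = 1" using bezout[OF cop xi_nz] by (elim exE)
  define h where "h = a * L1 + b * L2"
  have hP: "h * fst xi = L1"
  proof -
    have "h * fst xi = a * fst xi * L1 + b * (L2 * fst xi)" unfolding h_def by (simp add: distrib_left distrib_right ac_simps)
    also have "\<dots> = a * fst xi * L1 + b * (L1 * snd xi)" by (simp only: rad)
    also have "\<dots> = L1 * (a * fst xi + b * snd xi)" by (simp add: distrib_left distrib_right ac_simps)
    finally show ?thesis by (simp add: ab)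
  qed
  have hM: "h * snd xi = L2"
  proof -
    have "h * snd xi = a * (L1 * snd xi) + b * snd xi * L2" unfolding h_def by (simp add: distrib_left distrib_right ac_simps)
    also have "\<dots> = a * (L2 * fst xi) + b * snd xi * L2" by (simp only: rad)
    also have "\<dots> = L2 * (a * fst xi + b * snd xi)" by (simp add: distrib_left distrib_right ac_simps)
    finally show ?thesis by (simp add: ab)
  qed
  have hlow: "ks h \<subseteq> {..c - int n}"
    by (rule low_deg) (auto simp: hP hM L1_def L2_def ks_res)
  define R where "R = f + h"
  have RP: "R * fst xi = res (- {..c}) (f * fst xi)"
  proof -
    have "R * fst xi = (res {..c} (f * fst xi) + res (- {..c}) (f * fst xi)) + L1"
      unfolding R_def distrib_right hP using res_split by metis
    then show ?thesis unfolding L1_def by (simp only: add.commute[of "res {..c} _"] add.assoc lp_add_self add_0_right)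
  qed
  have RM: "R * snd xi = res (- {..c}) (f * snd xi)"
  proof -
    have "R * snd xi = (res {..c} (f * snd xi) + res (- {..c}) (f * snd xi)) + L2"
      unfolding R_def distrib_right hM using res_split by metis
    then show ?thesis unfolding L2_def by (simp only: add.commute[of "res {..c} _"] add.assoc lp_add_self add_0_right)
  qed
  have Rhigh: "ks R \<subseteq> {c + int n + 1..}"
    by (rule high_deg) (auto simp: RP RM ks_res)
  have fRh: "f = R + h" unfolding R_def by (simp only: add.assoc lp_add_self add_0_right)
  have "f = 0"
  proof (rule poly_mapping_eqI)
    fix x
    show "lk f x = lk 0 x"
    proof (cases "x \<in> W")
      case True
      then have "x \<notin> ks R" "x \<notin> ks h" using Rhigh hlow unfolding W_def by auto
      then show ?thesis unfolding fRh lookup_add by (simp add: in_keys_iff)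
    next
      case False
      then have "x \<notin> ks f" using fW by blast
      then show ?thesis by (simp add: in_keys_iff)
    qed
  qed
  then show False using f0 by simp
qed

end



context chain
begin

definition S :: "lpoly set" where "S = {f. ks f \<subseteq> W}"

lemma card_W: "card W = 2 * n" unfolding W_def by simp

lemma finite_W: "finite W" unfolding W_def by simp

lemma card_S: "card S = 4 ^ n"
  unfolding S_def card_polys[OF finite_W] card_W by (simp add: power_mult)

lemma finite_S: "finite S" unfolding S_def by (rule finite_polys[OF finite_W])

lemma Psi_stab: "Psi f \<in> stab xi" unfolding stab_def Psi_def by blast

lemma stab_Psi: "s \<in> stab xi \<Longrightarrow> \<exists>f. s = Psi f" unfolding stab_def Psi_def by blast

lemma crossL: "Bc f g = 1 \<Longrightarrow> supp (Psi f) \<inter> left_half c \<noteq> {}"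
proof
  assume "Bc f g = 1" and e: "supp (Psi f) \<inter> left_half c = {}"
  then have "supp (Psi f) \<inter> supp (Psi g) \<inter> left_half c = {}" by blast
  then have "Bc f g = 0" unfolding Bc_def sympl_on_def by (simp only: sum.empty)
  then show False using \<open>Bc f g = 1\<close> by simp
qed

lemma left_ok: "supp (Psi g) \<subseteq> left_half c \<Longrightarrow> Bc f g = 0"
proof -
  assume "supp (Psi g) \<subseteq> left_half c"
  then have "ks (g * fst xi) \<subseteq> {..c}" "ks (g * snd xi) \<subseteq> {..c}"
    unfolding supp_Psi left_half_def by auto
  then have "ks g \<subseteq> {..c - int n}" by (rule low_deg)
  then have "Bc g f = 0" by (rule Bc_low)
  then show ?thesis using Bc_sym by simp
qed

lemma crossR: "Bc f g = 1 \<Longrightarrow> supp (Psi f) \<inter> right_half c \<noteq> {}"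
proof
  assume "Bc f g = 1" and e: "supp (Psi f) \<inter> right_half c = {}"
  then have "supp (Psi f) \<subseteq> left_half c" unfolding left_half_def right_half_def by auto
  then have "Bc g f = 0" by (rule left_ok)
  then show False using \<open>Bc f g = 1\<close> Bc_sym by simp
qed

lemma exists_pairs: "\<exists>eta zeta. bell_pairs xi c n eta zeta"
proof -
  have S0: "0 \<in> S" unfolding S_def by simp
  have cl: "\<forall>x\<in>S. \<forall>y\<in>S. x + y \<in> S" unfolding S_def using keys_add_mem by blast
  have nd: "\<forall>x\<in>S. x \<noteq> 0 \<longrightarrow> (\<exists>y\<in>S. Bc x y = 1)" unfolding S_def using nondeg by blast
  obtain e z where ez: "\<forall>i<n. e i \<in> S \<and> z i \<in> S \<and> Bc (e i) (z i) = 1"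
    and cr: "\<forall>i<n. \<forall>j<n. i \<noteq> j \<longrightarrow> Bc (e i) (e j) = 0 \<and> Bc (e i) (z j) = 0 \<and> Bc (z i) (z j) = 0"
    using symplectic_basis[OF finite_S S0 cl card_S nd] by (elim exE conjE)
  have "bell_pairs xi c n (\<lambda>i. Psi (e i)) (\<lambda>i. Psi (z i))"
    unfolding bell_pairs_def
  proof (intro conjI allI impI ballI)
    fix i assume i: "i < n"
    have ezi: "Bc (e i) (z i) = 1" using ez i by blast
    have zei: "Bc (z i) (e i) = 1" using ezi Bc_sym by simp
    show "Psi (e i) \<in> stab xi" "Psi (z i) \<in> stab xi" by (rule Psi_stab)+
    show "supp (Psi (e i)) \<inter> left_half c \<noteq> {}" by (rule crossL[OF ezi])
    show "supp (Psi (e i)) \<inter> right_half c \<noteq> {}" by (rule crossR[OF ezi])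
    show "supp (Psi (z i)) \<inter> left_half c \<noteq> {}" by (rule crossL[OF zei])
    show "supp (Psi (z i)) \<inter> right_half c \<noteq> {}" by (rule crossR[OF zei])
    show "sympl_on (left_half c) (Psi (e i)) (Psi (z i)) = 1" using ezi unfolding Bc_def .
    fix s assume s: "s \<in> stab xi" "supp s \<subseteq> left_half c"
    from stab_Psi[OF s(1)] obtain g where g: "s = Psi g" by blast
    show "sympl_on (left_half c) (Psi (e i)) s = 0" "sympl_on (left_half c) (Psi (z i)) s = 0"
      using left_ok s(2) unfolding g Bc_def by blast+
  next
    fix i j assume "i < n" "j < n" "i \<noteq> j"
    then show "sympl_on (left_half c) (Psi (e i)) (Psi (e j)) = 0"
      "sympl_on (left_half c) (Psi (e i)) (Psi (z j)) = 0"
      "sympl_on (left_half c) (Psi (z i)) (Psi (z j)) = 0"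
      using cr unfolding Bc_def by blast+
  qed
  then show ?thesis by blast
qed

lemma res_three: "f = res {..c - int n} f + res {c + int n + 1..} f + res W f"
  by (rule poly_mapping_eqI) (auto simp: lk_res lookup_add W_def)

lemma prad: "res W x = 0 \<Longrightarrow> Bc x y = 0"
proof -
  assume r: "res W x = 0"
  have "Bc x y = Bc (res {..c - int n} x) y + Bc (res {c + int n + 1..} x) y + Bc (res W x) y"
    by (subst res_three) (simp only: Badd)
  also have "Bc (res {..c - int n} x) y = 0" by (rule Bc_low) (auto simp: ks_res)
  also have "Bc (res {c + int n + 1..} x) y = 0" by (rule Bc_high) (auto simp: ks_res)
  finally show ?thesis using r by simp
qed

lemma bound_pairs: "bell_pairs xi c k eta zeta \<Longrightarrow> k \<le> n"
proof -
  assume bp: "bell_pairs xi c k eta zeta"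
  define fe where "fe i = (SOME f. eta i = Psi f)" for i
  define fz where "fz i = (SOME f. zeta i = Psi f)" for i
  have bp1: "\<forall>i<k. eta i \<in> stab xi \<and> zeta i \<in> stab xi \<and> sympl_on (left_half c) (eta i) (zeta i) = 1"
    using bp unfolding bell_pairs_def by blast
  have bp2: "\<forall>i<k. \<forall>j<k. i \<noteq> j \<longrightarrow>
        sympl_on (left_half c) (eta i) (eta j) = 0 \<and> sympl_on (left_half c) (eta i) (zeta j) = 0
        \<and> sympl_on (left_half c) (zeta i) (zeta j) = 0"
    using bp unfolding bell_pairs_def by blast
  have efe: "eta i = Psi (fe i) \<and> zeta i = Psi (fz i)" if "i < k" for i
  proof -
    have "eta i \<in> stab xi" "zeta i \<in> stab xi" using bp1 that by simp_all
    then show ?thesis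
      unfolding fe_def fz_def using someI_ex[OF stab_Psi] by blast
  qed
  have ez: "\<forall>i<k. Bc (fe i) (fz i) = 1"
  proof (intro allI impI)
    fix i assume i: "i < k"
    have e: "eta i = Psi (fe i)" "zeta i = Psi (fz i)" using efe[OF i] by simp_all
    have "sympl_on (left_half c) (eta i) (zeta i) = 1" using bp1 i by blast
    then show "Bc (fe i) (fz i) = 1" unfolding e Bc_def .
  qed
  have cr: "\<forall>i<k. \<forall>j<k. i \<noteq> j \<longrightarrow> Bc (fe i) (fe j) = 0 \<and> Bc (fe i) (fz j) = 0 \<and> Bc (fz i) (fz j) = 0"
  proof (intro allI impI)
    fix i j assume i: "i < k" and j: "j < k" and ij: "i \<noteq> j"
    have "sympl_on (left_half c) (eta i) (eta j) = 0 \<and> sympl_on (left_half c) (eta i) (zeta j) = 0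
        \<and> sympl_on (left_half c) (zeta i) (zeta j) = 0" using bp2 i j ij by blast
    moreover have e: "eta i = Psi (fe i)" "zeta i = Psi (fz i)" "eta j = Psi (fe j)" "zeta j = Psi (fz j)"
      using efe[OF i] efe[OF j] by simp_all
    ultimately show "Bc (fe i) (fe j) = 0 \<and> Bc (fe i) (fz j) = 0 \<and> Bc (fz i) (fz j) = 0"
      unfolding Bc_def by simp
  qed
  show ?thesis
  proof (rule pairs_bound[where \<pi>="res W" and T=S])
    show "res W (x + y) = res W x + res W y" for x y by (rule res_add)
    show "Bc x y = 0" if "res W x = 0" for x y using prad that by blast
    show "res W x \<in> S" for x unfolding S_def by (auto simp: ks_res)
  qed (use finite_S card_S ez cr in auto)
qed

lemma entanglement_eq: "entanglement xi c = n"
  unfolding entanglement_def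
proof (rule Greatest_equality)
  show "\<exists>eta zeta. bell_pairs xi c n eta zeta" by (rule exists_pairs)
  show "\<And>y. \<exists>eta zeta. bell_pairs xi c y eta zeta \<Longrightarrow> y \<le> n" using bound_pairs by blast
qed

end

theorem mainTheorem14:
  fixes xi :: pvec and n :: nat and c :: int
  assumes "reflection_invariant xi"
    and "lcoprime (fst xi) (snd xi)"
    and "plength xi = 2 * n + 1"
  shows "entanglement xi c = n"
proof -
  interpret chain xi n c using assms by unfold_locales
  show ?thesis by (rule entanglement_eq)
qed

end
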